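(* Consider the upstream-downstream model described in the context, with $e_\rightarrow>e_\leftarrow$, and satisfying the fixation assumption. Let $d_\uparrow$ and $d_\downarrow$ be the death rates of each upstream and each downstream site, respectively. Then the overall fixation probability satisfies $\rho>1/N$, and consequently the molecular clock rate satisfies $K>u$, if and only if $d_\uparrow>d_\downarrow$.
   Context: General framework: $N$ sites, each occupied by an individual of type M or R; a replacement event is a pair $(R,\alpha)$ with $R\subseteq\{1,\ldots,N\}$, $\alpha:R\to\{1,\ldots,N\}$; a state-independent replacement rule $p(R,\alpha)$ drives the Markov chain where at each step an event is drawn and $s_i'=s_i$ for $i\notin R$, $s_i'=s_{\alpha(i)}$ for $i\in R$. Fixation assumption: there exist a site $i$ and a finite sequence of positive-probability events which, occurring consecutively, make every site carry the type initially at $i$. Define $e_{ij}=\sum_{(R,\alpha):\,j\in R,\,\alpha(j)=i}p(R,\alpha)$, $d_i=\sum_j e_{ji}$, $B=\sum_{i,j}e_{ij}$; $\rho_i$ is the probability that the chain started with M at site $i$ only is absorbed in all-M; $\rho=\frac1B\sum_i d_i\rho_i$; $K=Nu\rho$ for a mutation probability $u>0$. Upstream-downstream model: the sites are partitioned into $N_\uparrow\ge1$ upstream and $N_\downarrow\ge1$ downstream sites, $N=N_\uparrow+N_\downarrow$, with nonnegative constants $e_\uparrow,e_\downarrow,e_\rightarrow,e_\leftarrow$ such that $e_{ij}=e_\uparrow$ if $i,j$ are both upstream, $e_{ij}=e_\downarrow$ if both downstream, $e_{ij}=e_\rightarrow$ if $i$ is upstream and $j$ downstream, and $e_{ij}=e_\leftarrow$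 if $i$ is downstream and $j$ upstream. Then all upstream sites share a common death rate $d_\uparrow$ and all downstream sites a common death rate $d_\downarrow$, and $B=N_\uparrow d_\uparrow+N_\downarrow d_\downarrow$. *)

theory Defs
  imports "HOL-Probability.Probability"
begin

text \<open>Sites are 0,...,N-1. A state assigns to each site True (type M) or False (type R).
  A replacement event is a pair (R, alpha) with R a set of sites and alpha the parent map
  (only its values on R matter).\<close>

type_synonym event = "nat set \<times> (nat \<Rightarrow> nat)"
type_synonym state = "nat \<Rightarrow> bool"

definition apply_event :: "event \<Rightarrow> state \<Rightarrow> state" where
  "apply_event e s = (\<lambda>i. if i \<in> fst e then s (snd e i) else s i)"

definition valid_rule :: "event pmf \<Rightarrow> nat \<Rightarrow> bool" where
  "valid_rule p N \<longleftrightarrow> (\<forall>e \<in> set_pmf p. fst e \<subseteq> {..<N} \<and> snd e ` fst e \<subseteq> {..<N})"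

definition fixation_assumption :: "event pmf \<Rightarrow> nat \<Rightarrow> bool" where
  "fixation_assumption p N \<longleftrightarrow>
     (\<exists>i<N. \<exists>evs. (\<forall>e \<in> set evs. pmf p e > 0) \<and>
        (\<forall>s j. j < N \<longrightarrow> fold apply_event evs s j = s i))"

definition chain_dist :: "event pmf \<Rightarrow> nat \<Rightarrow> state \<Rightarrow> state pmf" where
  "chain_dist p n s0 =
     ((\<lambda>d. bind_pmf d (\<lambda>s. map_pmf (\<lambda>e. apply_event e s) p)) ^^ n) (return_pmf s0)"

text \<open>rho_i: probability that the chain started with M at site i only is absorbed in all-M
  (all-M is absorbing, so this is the limit of the probability of being all-M at time n).\<close>
definition fix_prob :: "event pmf \<Rightarrow> nat \<Rightarrow> nat \<Rightarrow> real" where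
  "fix_prob p N i = lim (\<lambda>n. pmf (chain_dist p n (\<lambda>j. j = i)) (\<lambda>j. j < N))"

definition edge_weight :: "event pmf \<Rightarrow> nat \<Rightarrow> nat \<Rightarrow> real" where
  "edge_weight p i j = measure_pmf.prob p {e. j \<in> fst e \<and> snd e j = i}"

definition death_rate :: "event pmf \<Rightarrow> nat \<Rightarrow> nat \<Rightarrow> real" where
  "death_rate p N i = (\<Sum>j<N. edge_weight p j i)"

definition total_B :: "event pmf \<Rightarrow> nat \<Rightarrow> real" where
  "total_B p N = (\<Sum>i<N. \<Sum>j<N. edge_weight p i j)"

definition overall_rho :: "event pmf \<Rightarrow> nat \<Rightarrow> real" where
  "overall_rho p N = (1 / total_B p N) * (\<Sum>i<N. death_rate p N i * fix_prob p N i)"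

definition clock_K :: "event pmf \<Rightarrow> nat \<Rightarrow> real \<Rightarrow> real" where
  "clock_K p N u = real N * u * overall_rho p N"

definition upstream_downstream ::
  "event pmf \<Rightarrow> nat \<Rightarrow> nat set \<Rightarrow> nat set \<Rightarrow> real \<Rightarrow> real \<Rightarrow> real \<Rightarrow> real \<Rightarrow> bool" where
  "upstream_downstream p N U D eU eD eR eL \<longleftrightarrow>
     U \<union> D = {..<N} \<and> U \<inter> D = {} \<and> U \<noteq> {} \<and> D \<noteq> {} \<and>
     eU \<ge> 0 \<and> eD \<ge> 0 \<and> eR \<ge> 0 \<and> eL \<ge> 0 \<and>
     (\<forall>i\<in>U. \<forall>j\<in>U. edge_weight p i j = eU) \<and>
     (\<forall>i\<in>D. \<forall>j\<in>D. edge_weight p i j = eD) \<and>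
     (\<forall>i\<in>U. \<forall>j\<in>D. edge_weight p i j = eR) \<and>
     (\<forall>i\<in>D. \<forall>j\<in>U. edge_weight p i j = eL)"

end

theory Submission
  imports Defs
begin
lemma integral_bind_pmf_bdd:
  fixes f :: "'b \<Rightarrow> real"
  assumes "\<And>x. \<bar>f x\<bar> \<le> B"
  shows "(\<integral>x. f x \<partial>bind_pmf M N) = (\<integral>x. (\<integral>y. f y \<partial>N x) \<partial>M)"
  unfolding measure_pmf_bind
  apply (rule integral_bind[where K="count_space UNIV" and B=B and B'=1])
  using assms by (simp_all add: measure_pmf.finite_measure_axioms measure_pmf_in_subprob_algebra)

lemma measure_bind_pmf':
  "measure_pmf.prob (bind_pmf M N) X = (\<integral>x. measure_pmf.prob (N x) X \<partial>M)"
  unfolding measure_pmf_bind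
  by (rule measure_pmf.measure_bind[where N="count_space UNIV"]) (simp_all add: measure_pmf_in_subprob_algebra)

lemma pmf_bind_ge: "pmf (bind_pmf M N) x \<ge> pmf M y * pmf (N y) x"
proof -
  have "ennreal (pmf M y * pmf (N y) x) = (\<integral>\<^sup>+z. ennreal (pmf (N y) x) * indicator {y} z \<partial>M)"
    by (simp add: emeasure_pmf_single mult.commute ennreal_mult)
  also have "\<dots> \<le> (\<integral>\<^sup>+z. ennreal (pmf (N z) x) \<partial>M)"
    by (intro nn_integral_mono) (auto split: split_indicator)
  also have "\<dots> = ennreal (pmf (bind_pmf M N) x)" by (simp add: ennreal_pmf_bind)
  finally show ?thesis by (subst (asm) ennreal_le_iff) simp_all
qed

lemma integrable_pmf_bdd:
  fixes f :: "'b \<Rightarrow> real"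
  assumes "\<And>x. \<bar>f x\<bar> \<le> B"
  shows "integrable (measure_pmf M) f"
  by (rule measure_pmf.integrable_const_bound[where B=B]) (use assms in auto)

definition stepd :: "event pmf \<Rightarrow> state pmf \<Rightarrow> state pmf" where
  "stepd p = (\<lambda>d. bind_pmf d (\<lambda>s. map_pmf (\<lambda>e. apply_event e s) p))"

lemma chain_dist_funpow: "chain_dist p n s0 = (stepd p ^^ n) (return_pmf s0)"
  unfolding chain_dist_def stepd_def by simp

lemma stepd_bind: "stepd p (bind_pmf d g) = bind_pmf d (\<lambda>x. stepd p (g x))"
  by (simp add: stepd_def bind_assoc_pmf)

lemma funpow_stepd_bind: "(stepd p ^^ m) (bind_pmf d g) = bind_pmf d (\<lambda>x. (stepd p ^^ m) (g x))"
  by (induction m) (simp_all add: stepd_bind)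

lemma chain_add: "chain_dist p (n+m) s0 = bind_pmf (chain_dist p n s0) (\<lambda>s. chain_dist p m s)"
proof -
  have "chain_dist p (n+m) s0 = (stepd p ^^ m) ((stepd p ^^ n) (return_pmf s0))"
    by (simp add: chain_dist_funpow funpow_add add.commute)
  also have "\<dots> = (stepd p ^^ m) (bind_pmf (chain_dist p n s0) return_pmf)"
    by (simp add: chain_dist_funpow bind_return_pmf')
  also have "\<dots> = bind_pmf (chain_dist p n s0) (\<lambda>s. chain_dist p m s)"
    by (simp add: funpow_stepd_bind chain_dist_funpow)
  finally show ?thesis .
qed

lemma chain_0: "chain_dist p 0 s = return_pmf s"
  by (simp add: chain_dist_funpow)

lemma chain_Suc: "chain_dist p (Suc n) s = stepd p (chain_dist p n s)"
  by (simp add: chain_dist_funpow)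

lemma chain_1: "chain_dist p (Suc 0) s = map_pmf (\<lambda>e. apply_event e s) p"
  by (simp add: chain_Suc chain_0 stepd_def bind_return_pmf)

definition Vs :: "nat \<Rightarrow> state set" where "Vs N = {s. \<forall>j. N \<le> j \<longrightarrow> \<not> s j}"

lemma apply_V: "valid_rule p N \<Longrightarrow> e \<in> set_pmf p \<Longrightarrow> s \<in> Vs N \<Longrightarrow> apply_event e s \<in> Vs N"
proof -
  assume v: "valid_rule p N" and e: "e \<in> set_pmf p" and s: "s \<in> Vs N"
  have "fst e \<subseteq> {..<N}" using v e unfolding valid_rule_def by blast
  then show ?thesis using s unfolding Vs_def apply_event_def by auto
qed

lemma chain_V: "valid_rule p N \<Longrightarrow> s \<in> Vs N \<Longrightarrow> set_pmf (chain_dist p n s) \<subseteq> Vs N"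
proof (induction n)
  case 0 then show ?case by (simp add: chain_0)
next
  case (Suc n)
  show ?case
  proof
    fix t assume "t \<in> set_pmf (chain_dist p (Suc n) s)"
    then obtain s' e where "s' \<in> set_pmf (chain_dist p n s)" "e \<in> set_pmf p" "t = apply_event e s'"
      unfolding chain_Suc stepd_def set_bind_pmf set_map_pmf by blast
    moreover have "set_pmf (chain_dist p n s) \<subseteq> Vs N" by (rule Suc.IH[OF Suc.prems])
    ultimately show "t \<in> Vs N" using apply_V[OF Suc.prems(1)] by blast
  qed
qed

definition Abs :: "nat \<Rightarrow> state set" where "Abs N = {(\<lambda>j. j < N), (\<lambda>j. False)}"

lemma absorb: "valid_rule p N \<Longrightarrow> e \<in> set_pmf p \<Longrightarrow> s \<in> Abs N \<Longrightarrow> apply_event e s = s"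
  unfolding valid_rule_def apply_event_def Abs_def by (auto intro!: ext)

lemma chain_absorb: assumes "valid_rule p N" "s \<in> Abs N" shows "chain_dist p m s = return_pmf s"
proof (induction m)
  case 0 then show ?case by (simp add: chain_0)
next
  case (Suc m)
  have "map_pmf (\<lambda>e. apply_event e s) p = map_pmf (\<lambda>e. s) p"
    by (rule map_pmf_cong) (auto simp: absorb[OF assms(1) _ assms(2)])
  then show ?case by (simp add: chain_Suc Suc stepd_def bind_return_pmf map_pmf_const)
qed

lemma fold_V: "valid_rule p N \<Longrightarrow> \<forall>e\<in>set evs. e \<in> set_pmf p \<Longrightarrow> s \<in> Vs N \<Longrightarrow> fold apply_event evs s \<in> Vs N"
  by (induction evs arbitrary: s) (auto simp: apply_V)

lemma pmf_chain_fold: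
  "pmf (chain_dist p (length evs) s) (fold apply_event evs s) \<ge> prod_list (map (pmf p) evs)"
proof (induction evs arbitrary: s)
  case Nil then show ?case by (simp add: chain_0)
next
  case (Cons e evs)
  have c: "chain_dist p (length (e # evs)) s = bind_pmf p (\<lambda>e. chain_dist p (length evs) (apply_event e s))"
    using chain_add[of p "Suc 0" "length evs" s] by (simp add: chain_1 bind_map_pmf)
  have "prod_list (map (pmf p) (e # evs)) \<le> pmf p e * pmf (chain_dist p (length evs) (apply_event e s)) (fold apply_event evs (apply_event e s))"
    using Cons[of "apply_event e s"] by (simp add: mult_left_mono)
  also have "\<dots> \<le> pmf (chain_dist p (length (e # evs)) s) (fold apply_event (e # evs) s)"
    unfolding c fold_Cons comp_def by (rule pmf_bind_ge)
  finally show ?case .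
qed

lemma q_step:
  assumes v: "valid_rule p N" and s0: "s0 \<in> Vs N" and b: "0 \<le> b"
    and bd: "\<And>s. s \<in> Vs N \<Longrightarrow> s \<notin> Abs N \<Longrightarrow> measure_pmf.prob (chain_dist p m s) (- Abs N) \<le> b"
  shows "measure_pmf.prob (chain_dist p (n+m) s0) (- Abs N) \<le> b * measure_pmf.prob (chain_dist p n s0) (- Abs N)"
proof -
  have "measure_pmf.prob (chain_dist p (n+m) s0) (- Abs N)
      = (\<integral>s. measure_pmf.prob (chain_dist p m s) (- Abs N) \<partial>chain_dist p n s0)"
    by (simp add: chain_add measure_bind_pmf')
  also have "\<dots> \<le> (\<integral>s. b * indicator (- Abs N) s \<partial>chain_dist p n s0)"
  proof (rule integral_mono_AE)
    show "integrable (measure_pmf (chain_dist p n s0)) (\<lambda>s. measure_pmf.prob (chain_dist p m s) (- Abs N))"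
      by (rule integrable_pmf_bdd[where B=1]) (simp only: abs_of_nonneg measure_nonneg measure_pmf.prob_le_1)
    show "integrable (measure_pmf (chain_dist p n s0)) (\<lambda>s. b * indicator (- Abs N) s)"
      by (rule integrable_pmf_bdd[where B="\<bar>b\<bar>"]) (simp add: indicator_def)
    show "AE s in measure_pmf (chain_dist p n s0). measure_pmf.prob (chain_dist p m s) (- Abs N) \<le> b * indicator (- Abs N) s"
    proof (subst AE_measure_pmf_iff, intro ballI)
      fix s assume "s \<in> set_pmf (chain_dist p n s0)"
      then have sV: "s \<in> Vs N" using chain_V[OF v s0] by blast
      show "measure_pmf.prob (chain_dist p m s) (- Abs N) \<le> b * indicator (- Abs N) s"
      proof (cases "s \<in> Abs N")
        case True
        then show ?thesis using chain_absorb[OF v True, of m] by simp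
      next
        case False
        then show ?thesis using bd[OF sV False] by simp
      qed
    qed
  qed
  also have "\<dots> = b * measure_pmf.prob (chain_dist p n s0) (- Abs N)"
    by simp
  finally show ?thesis .
qed

lemma prod_list_pmf_bounds:
  assumes "\<forall>e\<in>set evs. pmf p e > 0"
  shows "0 < prod_list (map (pmf p) evs) \<and> prod_list (map (pmf p) evs) \<le> 1"
  using assms
proof (induction evs)
  case Nil then show ?case by simp
next
  case (Cons e evs)
  then show ?case by (auto intro: mult_le_one pmf_le_1)
qed

lemma q_tendsto:
  assumes v: "valid_rule p N" and fx: "fixation_assumption p N" and s0: "s0 \<in> Vs N"
  shows "(\<lambda>n. measure_pmf.prob (chain_dist p n s0) (- Abs N)) \<longlonglongrightarrow> 0"
proof -
  define q where "q n = measure_pmf.prob (chain_dist p n s0) (- Abs N)" for n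
  obtain i0 evs where i0: "i0 < N" and pos: "\<forall>e \<in> set evs. pmf p e > 0"
    and fl: "\<forall>s j. j < N \<longrightarrow> fold apply_event evs s j = s i0"
    using fx unfolding fixation_assumption_def by (elim exE conjE) (rule that; assumption)
  define c where "c = prod_list (map (pmf p) evs)"
  have c: "0 < c" "c \<le> 1" using prod_list_pmf_bounds[OF pos] by (auto simp: c_def)
  have evs_set: "\<forall>e\<in>set evs. e \<in> set_pmf p" using pos by (simp add: set_pmf_eq')
  have bdL: "measure_pmf.prob (chain_dist p (length evs) s) (- Abs N) \<le> 1 - c"
    if sV: "s \<in> Vs N" for s
  proof -
    let ?t = "fold apply_event evs s"
    have tV: "?t \<in> Vs N" using fold_V[OF v evs_set sV] .
    have "?t = (if s i0 then (\<lambda>j. j < N) else (\<lambda>j. False))"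
    proof
      fix j show "?t j = (if s i0 then (\<lambda>j. j < N) else (\<lambda>j. False)) j"
      proof (cases "j < N")
        case True
        then have "?t j = s i0" using fl by blast
        then show ?thesis using True by simp
      next
        case False
        then have "\<not> ?t j" using tV unfolding Vs_def by simp
        then show ?thesis using False by simp
      qed
    qed
    then have tA: "?t \<in> Abs N" by (simp add: Abs_def)
    have "c \<le> pmf (chain_dist p (length evs) s) ?t" using pmf_chain_fold unfolding c_def .
    also have "\<dots> \<le> measure_pmf.prob (chain_dist p (length evs) s) (Abs N)"
    proof -
      have "pmf (chain_dist p (length evs) s) ?t = measure_pmf.prob (chain_dist p (length evs) s) {?t}"
        by (rule measure_pmf_single[symmetric])
      also have "\<dots> \<le> measure_pmf.prob (chain_dist p (length evs) s) (Abs N)"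
        by (rule measure_pmf.finite_measure_mono) (use tA in auto)
      finally show ?thesis .
    qed
    finally have "c \<le> measure_pmf.prob (chain_dist p (length evs) s) (Abs N)" .
    moreover have "measure_pmf.prob (chain_dist p (length evs) s) (- Abs N) = 1 - measure_pmf.prob (chain_dist p (length evs) s) (Abs N)"
      using measure_pmf.prob_compl[of "Abs N" "chain_dist p (length evs) s"] by (simp add: Compl_eq_Diff_UNIV)
    ultimately show ?thesis by linarith
  qed
  have c1: "0 \<le> 1 - c" using c by simp
  have qL: "q (n + length evs) \<le> (1 - c) * q n" for n
    unfolding q_def by (rule q_step[OF v s0 c1]) (rule bdL)
  have q1: "q (Suc n) \<le> q n" for n
  proof -
    have "measure_pmf.prob (chain_dist p (n + Suc 0) s0) (- Abs N) \<le> 1 * measure_pmf.prob (chain_dist p n s0) (- Abs N)"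
      by (rule q_step[OF v s0]) (simp_all add: measure_pmf.prob_le_1)
    then show ?thesis by (simp add: q_def)
  qed
  have q0: "0 \<le> q n" for n by (simp add: q_def)
  have "decseq q" using q1 by (simp add: decseq_Suc_iff)
  then obtain l where l: "q \<longlonglongrightarrow> l" "\<forall>i. l \<le> q i" using decseq_convergent[of q 0] q0 by blast
  have l0: "0 \<le> l" by (rule LIMSEQ_le_const[OF l(1)]) (use q0 in auto)
  have "(\<lambda>n. q (n + length evs)) \<longlonglongrightarrow> l" using LIMSEQ_ignore_initial_segment[OF l(1)] .
  moreover have "(\<lambda>n. (1 - c) * q n) \<longlonglongrightarrow> (1 - c) * l" by (intro tendsto_mult_left l(1))
  ultimately have "l \<le> (1 - c) * l" by (rule LIMSEQ_le) (use qL in auto)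
  then have "c * l \<le> 0" by (simp add: algebra_simps)
  then have "l \<le> 0" using c(1) by (simp add: mult_le_0_iff)
  then have "l = 0" using l0 by linarith
  then show ?thesis using l(1) unfolding q_def by simp
qed

definition ind :: "bool \<Rightarrow> real" where "ind b = (if b then 1 else 0)"

definition fval :: "(nat \<Rightarrow> real) \<Rightarrow> nat \<Rightarrow> state \<Rightarrow> real" where
  "fval \<pi> N s = (\<Sum>i<N. \<pi> i * ind (s i))"

lemma fval_bound: "\<bar>fval \<pi> N s\<bar> \<le> (\<Sum>i<N. \<bar>\<pi> i\<bar>)"
proof -
  have "\<bar>fval \<pi> N s\<bar> \<le> (\<Sum>i<N. \<bar>\<pi> i * ind (s i)\<bar>)" unfolding fval_def by (rule sum_abs)
  also have "\<dots> \<le> (\<Sum>i<N. \<bar>\<pi> i\<bar>)"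
    by (rule sum_mono) (simp add: ind_def abs_mult)
  finally show ?thesis .
qed

lemma ind_apply:
  assumes v: "valid_rule p N" and e: "e \<in> set_pmf p" and i: "i < N"
  shows "ind (apply_event e s i) = ind (s i) + (\<Sum>k<N. indicator {e. i \<in> fst e \<and> snd e i = k} e * (ind (s k) - ind (s i)))"
proof (cases "i \<in> fst e")
  case True
  have lt: "snd e i < N" using v e True unfolding valid_rule_def by auto
  have "(\<Sum>k<N. indicator {e. i \<in> fst e \<and> snd e i = k} e * (ind (s k) - ind (s i)))
      = (\<Sum>k<N. if k = snd e i then ind (s k) - ind (s i) else 0)"
    by (rule sum.cong) (auto simp: True indicator_def)
  also have "\<dots> = ind (s (snd e i)) - ind (s i)" using lt by (simp add: sum.delta')
  finally show ?thesis using True by (simp add: apply_event_def)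
next
  case False
  then show ?thesis by (simp add: apply_event_def indicator_def)
qed

lemma mart_step:
  assumes v: "valid_rule p N"
    and bal: "\<And>k. k < N \<Longrightarrow> (\<Sum>i<N. edge_weight p k i * \<pi> i) = \<pi> k * death_rate p N k"
  shows "(\<integral>e. fval \<pi> N (apply_event e s) \<partial>p) = fval \<pi> N s"
proof -
  define w where "w k i = edge_weight p k i" for k i
  define a where "a k = ind (s k)" for k
  define I :: "nat \<Rightarrow> nat \<Rightarrow> event \<Rightarrow> real" where "I k i = indicator {e. i \<in> fst e \<and> snd e i = k}" for k i
  have Ii: "integrable (measure_pmf p) (\<lambda>e. I k i e * c)" for k i c
    by (rule integrable_pmf_bdd[where B="\<bar>c\<bar>"]) (simp add: I_def indicator_def)
  have II: "(\<integral>e. I k i e * c \<partial>p) = w k i * c" for k i c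
    by (simp add: I_def w_def edge_weight_def)
  have III: "(\<integral>e. I k i e \<partial>p) = w k i" for k i
    by (simp add: I_def w_def edge_weight_def)
  have "(\<integral>e. fval \<pi> N (apply_event e s) \<partial>p)
      = (\<integral>e. (\<Sum>i<N. \<pi> i * a i + (\<Sum>k<N. \<pi> i * (I k i e * (a k - a i)))) \<partial>p)"
  proof (rule integral_cong_AE)
    show "AE e in measure_pmf p. fval \<pi> N (apply_event e s) = (\<Sum>i<N. \<pi> i * a i + (\<Sum>k<N. \<pi> i * (I k i e * (a k - a i))))"
      unfolding AE_measure_pmf_iff
    proof
      fix e assume e: "e \<in> set_pmf p"
      show "fval \<pi> N (apply_event e s) = (\<Sum>i<N. \<pi> i * a i + (\<Sum>k<N. \<pi> i * (I k i e * (a k - a i))))"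
        unfolding fval_def
      proof (rule sum.cong[OF refl])
        fix i assume "i \<in> {..<N}"
        then have "ind (apply_event e s i) = a i + (\<Sum>k<N. I k i e * (a k - a i))"
          using ind_apply[OF v e] unfolding a_def I_def by simp
        then show "\<pi> i * ind (apply_event e s i) = \<pi> i * a i + (\<Sum>k<N. \<pi> i * (I k i e * (a k - a i)))"
          by (simp add: distrib_left sum_distrib_left)
      qed
    qed
  qed simp_all
  also have "\<dots> = (\<Sum>i<N. \<pi> i * a i + (\<Sum>k<N. \<pi> i * (w k i * (a k - a i))))"
  proof -
    have Ij: "integrable (measure_pmf p) (\<lambda>e. \<pi> i * (I k i e * c))" for i k c
      by (rule integrable_mult_right) (rule Ii)
    have e1: "(\<integral>e. \<pi> i * (I k i e * c) \<partial>p) = \<pi> i * (w k i * c)" for i k c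
      by (simp add: II III)
    have Is: "integrable (measure_pmf p) (\<lambda>e. \<Sum>k<N. \<pi> i * (I k i e * (a k - a i)))" for i
      apply (rule integrable_pmf_bdd[where B="\<Sum>k<N. \<bar>\<pi> i * (a k - a i)\<bar>"])
      apply (rule order_trans[OF sum_abs])
      apply (rule sum_mono)
      apply (simp add: I_def indicator_def abs_mult)
      done
    have e2: "(\<integral>e. (\<Sum>k<N. \<pi> i * (I k i e * (a k - a i))) \<partial>p) = (\<Sum>k<N. \<pi> i * (w k i * (a k - a i)))" for i
      using Bochner_Integration.integral_sum[where M="measure_pmf p" and I="{..<N}" and f="\<lambda>k e. \<pi> i * (I k i e * (a k - a i))", OF Ij] by (simp add: III)
    have Ia: "integrable (measure_pmf p) (\<lambda>e. \<pi> i * a i + (\<Sum>k<N. \<pi> i * (I k i e * (a k - a i))))" for i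
      by (rule Bochner_Integration.integrable_add) (simp_all add: Is)
    have e3: "(\<integral>e. \<pi> i * a i + (\<Sum>k<N. \<pi> i * (I k i e * (a k - a i))) \<partial>p) = \<pi> i * a i + (\<Sum>k<N. \<pi> i * (w k i * (a k - a i)))" for i
      using Bochner_Integration.integral_add[where M="measure_pmf p" and f="\<lambda>e. \<pi> i * a i", OF _ Is] e2 by simp
    show ?thesis
      using Bochner_Integration.integral_sum[where M="measure_pmf p" and I="{..<N}" and f="\<lambda>i e. \<pi> i * a i + (\<Sum>k<N. \<pi> i * (I k i e * (a k - a i)))", OF Ia] e3 by simp
  qed
  also have "\<dots> = (\<Sum>i<N. \<pi> i * a i) + (\<Sum>i<N. \<Sum>k<N. \<pi> i * w k i * a k) - (\<Sum>i<N. \<Sum>k<N. \<pi> i * a i * w k i)"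
    by (simp add: sum.distrib sum_subtractf algebra_simps)
  also have "(\<Sum>i<N. \<Sum>k<N. \<pi> i * w k i * a k) = (\<Sum>k<N. a k * (\<Sum>i<N. w k i * \<pi> i))"
    by (subst sum.swap) (simp add: sum_distrib_left mult_ac)
  also have "\<dots> = (\<Sum>k<N. a k * (\<pi> k * death_rate p N k))"
    by (rule sum.cong[OF refl]) (simp add: bal w_def)
  also have "(\<Sum>i<N. \<Sum>k<N. \<pi> i * a i * w k i) = (\<Sum>i<N. \<pi> i * a i * death_rate p N i)"
    by (simp add: death_rate_def w_def sum_distrib_left)
  finally show ?thesis by (simp add: fval_def a_def mult_ac)
qed

lemma mart:
  assumes v: "valid_rule p N"
    and bal: "\<And>k. k < N \<Longrightarrow> (\<Sum>i<N. edge_weight p k i * \<pi> i) = \<pi> k * death_rate p N k"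
  shows "(\<integral>s. fval \<pi> N s \<partial>chain_dist p n s0) = fval \<pi> N s0"
proof (induction n)
  case 0 then show ?case by (simp add: chain_0)
next
  case (Suc n)
  have "(\<integral>s. fval \<pi> N s \<partial>chain_dist p (Suc n) s0)
      = (\<integral>s. (\<integral>t. fval \<pi> N t \<partial>map_pmf (\<lambda>e. apply_event e s) p) \<partial>chain_dist p n s0)"
    unfolding chain_Suc stepd_def by (rule integral_bind_pmf_bdd[OF fval_bound])
  also have "\<dots> = (\<integral>s. fval \<pi> N s \<partial>chain_dist p n s0)"
    by (simp add: mart_step[OF v bal])
  finally show ?case using Suc by simp
qed

lemma fix_prob_eq:
  assumes v: "valid_rule p N" and fx: "fixation_assumption p N"
    and bal: "\<And>k. k < N \<Longrightarrow> (\<Sum>i<N. edge_weight p k i * \<pi> i) = \<pi> k * death_rate p N k"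
    and s1: "(\<Sum>i<N. \<pi> i) = 1" and i: "i < N"
  shows "fix_prob p N i = \<pi> i"
proof -
  define s0 :: state where "s0 = (\<lambda>j. j = i)"
  define A :: state where "A = (\<lambda>j. j < N)"
  define M where "M = (\<Sum>i<N. \<bar>\<pi> i\<bar>)"
  have s0V: "s0 \<in> Vs N" using i by (auto simp: s0_def Vs_def)
  have fs0: "fval \<pi> N s0 = \<pi> i"
  proof -
    have "fval \<pi> N s0 = (\<Sum>k<N. if k = i then \<pi> k else 0)"
      unfolding fval_def s0_def by (rule sum.cong) (auto simp: ind_def)
    then show ?thesis using i by (simp add: sum.delta')
  qed
  have fA: "fval \<pi> N A = 1" using s1 by (simp add: fval_def A_def ind_def)
  have fZ: "fval \<pi> N (\<lambda>j. False) = 0" by (simp add: fval_def ind_def)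
  have AZ: "A \<noteq> (\<lambda>j. False)" using i by (auto simp: A_def fun_eq_iff)
  have dec: "fval \<pi> N s = fval \<pi> N s * indicator (- Abs N) s + indicator {A} s" for s
    using fA fZ AZ by (auto simp: Abs_def A_def[symmetric] indicator_def)
  define q where "q n = measure_pmf.prob (chain_dist p n s0) (- Abs N)" for n
  have bound: "\<bar>pmf (chain_dist p n s0) A - \<pi> i\<bar> \<le> M * q n" for n
  proof -
    let ?C = "chain_dist p n s0"
    let ?g = "\<lambda>s. fval \<pi> N s * indicator (- Abs N) s"
    have ig: "integrable (measure_pmf ?C) ?g"
      by (rule integrable_pmf_bdd[where B=M]) (auto simp: indicator_def M_def fval_bound)
    have iA: "integrable (measure_pmf ?C) (indicator {A} :: state \<Rightarrow> real)"
      by (rule integrable_pmf_bdd[where B=1]) (simp add: indicator_def)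
    have "\<pi> i = (\<integral>s. fval \<pi> N s \<partial>?C)" using mart[OF v bal] fs0 by simp
    also have "\<dots> = (\<integral>s. ?g s + indicator {A} s \<partial>?C)"
      by (subst dec) (rule refl)
    also have "\<dots> = (\<integral>s. ?g s \<partial>?C) + pmf ?C A"
      using Bochner_Integration.integral_add[OF ig iA] by (simp add: measure_pmf_single)
    finally have eq: "pmf ?C A - \<pi> i = - (\<integral>s. ?g s \<partial>?C)" by simp
    have "\<bar>\<integral>s. ?g s \<partial>?C\<bar> \<le> (\<integral>s. M * indicator (- Abs N) s \<partial>?C)"
    proof -
      have i2: "integrable (measure_pmf ?C) (\<lambda>s. M * indicator (- Abs N) s)"
        by (rule integrable_pmf_bdd[where B="\<bar>M\<bar>"]) (simp add: indicator_def)
      have "(\<integral>s. ?g s \<partial>?C) \<le> (\<integral>s. M * indicator (- Abs N) s \<partial>?C)"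
        by (rule integral_mono[OF ig i2])
           (auto simp: indicator_def M_def intro: order_trans[OF abs_ge_self fval_bound])
      moreover have "- (\<integral>s. ?g s \<partial>?C) \<le> (\<integral>s. M * indicator (- Abs N) s \<partial>?C)"
      proof -
        have "(\<integral>s. - M * indicator (- Abs N) s \<partial>?C) \<le> (\<integral>s. ?g s \<partial>?C)"
        proof (rule integral_mono[OF _ ig])
          show "integrable (measure_pmf ?C) (\<lambda>s. - M * indicator (- Abs N) s)"
            by (rule integrable_pmf_bdd[where B="\<bar>M\<bar>"]) (simp add: indicator_def)
          fix s
          have "- M \<le> fval \<pi> N s" using fval_bound[of \<pi> N s] unfolding M_def by linarith
          then show "- M * indicator (- Abs N) s \<le> ?g s" by (simp add: indicator_def)
        qed
        then show ?thesis by simp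
      qed
      ultimately show ?thesis by linarith
    qed
    also have "\<dots> = M * q n" by (simp add: q_def)
    finally show ?thesis using eq by simp
  qed
  have qt: "q \<longlonglongrightarrow> 0" unfolding q_def by (rule q_tendsto[OF v fx s0V])
  have "(\<lambda>n. pmf (chain_dist p n s0) A - \<pi> i) \<longlonglongrightarrow> 0"
  proof (rule Lim_null_comparison)
    show "\<forall>\<^sub>F n in sequentially. norm (pmf (chain_dist p n s0) A - \<pi> i) \<le> M * q n"
      using bound by simp
    show "(\<lambda>n. M * q n) \<longlonglongrightarrow> 0" using tendsto_mult_right_zero[OF qt] by simp
  qed
  then have "(\<lambda>n. pmf (chain_dist p n s0) A) \<longlonglongrightarrow> \<pi> i"
    by (simp add: LIM_zero_iff)
  then show ?thesis unfolding fix_prob_def s0_def[symmetric] A_def[symmetric] by (rule limI)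
qed

lemma sum_const_on: "(\<And>i. i \<in> S \<Longrightarrow> f i = c) \<Longrightarrow> sum f S = real (card S) * (c::real)"
proof -
  assume h: "\<And>i. i \<in> S \<Longrightarrow> f i = c"
  have "sum f S = sum (\<lambda>_. c) S" by (rule sum.cong) (simp_all add: h)
  then show ?thesis by simp
qed

theorem mainTheorem8:
  fixes p :: "event pmf" and N :: nat and U D :: "nat set"
    and eU eD eR eL dU dD u :: real
  assumes "valid_rule p N"
    and "fixation_assumption p N"
    and "upstream_downstream p N U D eU eD eR eL"
    and "eR > eL"
    and "\<forall>i\<in>U. death_rate p N i = dU"
    and "\<forall>j\<in>D. death_rate p N j = dD"
    and "u > 0"
  shows "(overall_rho p N > 1 / real N \<longleftrightarrow> dU > dD)
       \<and> (clock_K p N u > u \<longleftrightarrow> dU > dD)"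
proof -
  note v = assms(1) and fx = assms(2) and ud = assms(3)
  have UD: "U \<union> D = {..<N}" and disj: "U \<inter> D = {}" and Une: "U \<noteq> {}" and Dne: "D \<noteq> {}"
    and eLnn: "eL \<ge> 0" and eDnn: "eD \<ge> 0" and eUnn: "eU \<ge> 0"
    and wUU: "\<forall>i\<in>U. \<forall>j\<in>U. edge_weight p i j = eU"
    and wDD: "\<forall>i\<in>D. \<forall>j\<in>D. edge_weight p i j = eD"
    and wUD: "\<forall>i\<in>U. \<forall>j\<in>D. edge_weight p i j = eR"
    and wDU: "\<forall>i\<in>D. \<forall>j\<in>U. edge_weight p i j = eL"
    using ud unfolding upstream_downstream_def by auto
  have dUdef: "\<And>i. i \<in> U \<Longrightarrow> death_rate p N i = dU" and dDdef: "\<And>i. i \<in> D \<Longrightarrow> death_rate p N i = dD"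
    using assms(5,6) by auto
  have finU: "finite U" and finD: "finite D"
    using UD by (metis finite_Un finite_lessThan)+
  have split: "(\<Sum>i<N. g i) = (\<Sum>i\<in>U. g i) + (\<Sum>i\<in>D. g i)" for g :: "nat \<Rightarrow> real"
    unfolding UD[symmetric] by (rule sum.union_disjoint[OF finU finD disj])
  define a where "a = real (card U)"
  define b where "b = real (card D)"
  have a: "a \<ge> 1" using Une finU by (simp add: a_def Suc_leI card_gt_0_iff)
  have b: "b \<ge> 1" using Dne finD by (simp add: b_def Suc_leI card_gt_0_iff)
  have Nab: "real N = a + b"
  proof -
    have "card (U \<union> D) = card U + card D" by (rule card_Un_disjoint[OF finU finD disj])
    then show ?thesis using UD by (simp add: a_def b_def)
  qed
  have eRpos: "eR > 0" using assms(4) eLnn by linarith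
  define Z where "Z = a * eR + b * eL"
  have Zpos: "Z > 0" using a b eRpos eLnn unfolding Z_def
    by (smt (verit) mult_nonneg_nonneg mult_pos_pos)
  define \<pi> :: "nat \<Rightarrow> real" where "\<pi> k = (if k \<in> U then eR / Z else eL / Z)" for k
  have \<pi>U: "\<And>k. k \<in> U \<Longrightarrow> \<pi> k = eR / Z" by (simp add: \<pi>_def)
  have \<pi>D: "\<And>k. k \<in> D \<Longrightarrow> \<pi> k = eL / Z" using disj by (auto simp: \<pi>_def)
  have drU: "death_rate p N k = a * eU + b * eL" if k: "k \<in> U" for k
  proof -
    have "death_rate p N k = (\<Sum>j\<in>U. edge_weight p j k) + (\<Sum>j\<in>D. edge_weight p j k)"
      unfolding death_rate_def by (rule split)
    also have "(\<Sum>j\<in>U. edge_weight p j k) = a * eU" unfolding a_def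
      by (rule sum_const_on) (use wUU k in auto)
    also have "(\<Sum>j\<in>D. edge_weight p j k) = b * eL" unfolding b_def
      by (rule sum_const_on) (use wDU k in auto)
    finally show ?thesis .
  qed
  have drD: "death_rate p N k = a * eR + b * eD" if k: "k \<in> D" for k
  proof -
    have "death_rate p N k = (\<Sum>j\<in>U. edge_weight p j k) + (\<Sum>j\<in>D. edge_weight p j k)"
      unfolding death_rate_def by (rule split)
    also have "(\<Sum>j\<in>U. edge_weight p j k) = a * eR" unfolding a_def
      by (rule sum_const_on) (use wUD k in auto)
    also have "(\<Sum>j\<in>D. edge_weight p j k) = b * eD" unfolding b_def
      by (rule sum_const_on) (use wDD k in auto)
    finally show ?thesis .
  qed
  have bal: "(\<Sum>i<N. edge_weight p k i * \<pi> i) = \<pi> k * death_rate p N k" if k: "k < N" for k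
  proof -
    have s: "(\<Sum>i<N. edge_weight p k i * \<pi> i) = (\<Sum>i\<in>U. edge_weight p k i * \<pi> i) + (\<Sum>i\<in>D. edge_weight p k i * \<pi> i)"
      by (rule split)
    have "k \<in> U \<or> k \<in> D" using k UD by auto
    then show ?thesis
    proof
      assume kU: "k \<in> U"
      have "(\<Sum>i\<in>U. edge_weight p k i * \<pi> i) = a * (eU * (eR / Z))" unfolding a_def
        by (rule sum_const_on) (use wUU kU \<pi>U in auto)
      moreover have "(\<Sum>i\<in>D. edge_weight p k i * \<pi> i) = b * (eR * (eL / Z))" unfolding b_def
        by (rule sum_const_on) (use wUD kU \<pi>D in auto)
      ultimately have h1: "(\<Sum>i<N. edge_weight p k i * \<pi> i) = a * (eU * (eR / Z)) + b * (eR * (eL / Z))"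
        using s by simp
      have h2: "\<pi> k * death_rate p N k = eR / Z * (a * eU + b * eL)" using drU[OF kU] \<pi>U[OF kU] by simp
      have h3: "a * (eU * (eR / Z)) + b * (eR * (eL / Z)) = eR / Z * (a * eU + b * eL)" by (simp add: algebra_simps)
      show ?thesis using h1 h2 h3 by simp
    next
      assume kD: "k \<in> D"
      have "(\<Sum>i\<in>U. edge_weight p k i * \<pi> i) = a * (eL * (eR / Z))" unfolding a_def
        by (rule sum_const_on) (use wDU kD \<pi>U in auto)
      moreover have "(\<Sum>i\<in>D. edge_weight p k i * \<pi> i) = b * (eD * (eL / Z))" unfolding b_def
        by (rule sum_const_on) (use wDD kD \<pi>D in auto)
      ultimately have h1: "(\<Sum>i<N. edge_weight p k i * \<pi> i) = a * (eL * (eR / Z)) + b * (eD * (eL / Z))"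
        using s by simp
      have h2: "\<pi> k * death_rate p N k = eL / Z * (a * eR + b * eD)" using drD[OF kD] \<pi>D[OF kD] by simp
      have h3: "a * (eL * (eR / Z)) + b * (eD * (eL / Z)) = eL / Z * (a * eR + b * eD)" by (simp add: algebra_simps)
      show ?thesis using h1 h2 h3 by simp
    qed
  qed
  have s1: "(\<Sum>i<N. \<pi> i) = 1"
  proof -
    have "(\<Sum>i<N. \<pi> i) = (\<Sum>i\<in>U. \<pi> i) + (\<Sum>i\<in>D. \<pi> i)" by (rule split)
    also have "(\<Sum>i\<in>U. \<pi> i) = a * (eR / Z)" unfolding a_def by (rule sum_const_on) (use \<pi>U in auto)
    also have "(\<Sum>i\<in>D. \<pi> i) = b * (eL / Z)" unfolding b_def by (rule sum_const_on) (use \<pi>D in auto)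
    finally have "(\<Sum>i<N. \<pi> i) = a * (eR / Z) + b * (eL / Z)" .
    also have "\<dots> = (a * eR + b * eL) / Z" by (simp add: add_divide_distrib)
    also have "\<dots> = 1" using Zpos by (simp add: Z_def)
    finally show ?thesis .
  qed
  have fp: "fix_prob p N i = \<pi> i" if "i < N" for i
    by (rule fix_prob_eq[OF v fx bal s1 that])
  have dD: "dD = a * eR + b * eD" using Dne drD dDdef by auto
  have dUv: "dU = a * eU + b * eL" using Une drU dUdef by auto
  have dDpos: "dD > 0" using dD a b eRpos eDnn by (smt (verit) mult_nonneg_nonneg mult_pos_pos)
  have dUnn: "dU \<ge> 0" using dUv a b eUnn eLnn by (smt (verit) mult_nonneg_nonneg)
  define B where "B = a * dU + b * dD"
  have Bpos: "B > 0" unfolding B_def using a b dDpos dUnn by (smt (verit) mult_nonneg_nonneg mult_pos_pos)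
  have TB: "total_B p N = B"
  proof -
    have "total_B p N = (\<Sum>j<N. \<Sum>i<N. edge_weight p i j)"
      unfolding total_B_def by (rule sum.swap)
    also have "\<dots> = (\<Sum>j<N. death_rate p N j)" by (simp add: death_rate_def)
    also have "\<dots> = (\<Sum>j\<in>U. death_rate p N j) + (\<Sum>j\<in>D. death_rate p N j)" by (rule split)
    also have "(\<Sum>j\<in>U. death_rate p N j) = a * dU" unfolding a_def by (rule sum_const_on) (use dUdef in auto)
    also have "(\<Sum>j\<in>D. death_rate p N j) = b * dD" unfolding b_def by (rule sum_const_on) (use dDdef in auto)
    finally show ?thesis by (simp add: B_def)
  qed
  define X where "X = a * dU * eR + b * dD * eL"
  have rho: "overall_rho p N = X / (B * Z)"
  proof -
    have "(\<Sum>i<N. death_rate p N i * fix_prob p N i) = (\<Sum>i<N. death_rate p N i * \<pi> i)"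
      by (rule sum.cong) (simp_all add: fp)
    also have "\<dots> = (\<Sum>i\<in>U. death_rate p N i * \<pi> i) + (\<Sum>i\<in>D. death_rate p N i * \<pi> i)" by (rule split)
    also have "(\<Sum>i\<in>U. death_rate p N i * \<pi> i) = a * (dU * (eR / Z))" unfolding a_def
      by (rule sum_const_on) (use dUdef \<pi>U in auto)
    also have "(\<Sum>i\<in>D. death_rate p N i * \<pi> i) = b * (dD * (eL / Z))" unfolding b_def
      by (rule sum_const_on) (use dDdef \<pi>D in auto)
    finally have "(\<Sum>i<N. death_rate p N i * fix_prob p N i) = X / Z"
      using Zpos by (simp add: X_def field_simps)
    then show ?thesis unfolding overall_rho_def TB by simp
  qed
  have Npos: "real N > 0" using Nab a b by linarith
  have key: "real N * X - B * Z = a * b * (eR - eL) * (dU - dD)"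
    unfolding Nab X_def B_def Z_def by (simp add: algebra_simps)
  have P: "a * b * (eR - eL) > 0" using a b assms(4) by simp
  have iff1: "1 / real N < overall_rho p N \<longleftrightarrow> B * Z < real N * X"
    unfolding rho using Npos Bpos Zpos by (simp add: field_simps)
  have iff2: "B * Z < real N * X \<longleftrightarrow> dD < dU"
  proof -
    have "B * Z < real N * X \<longleftrightarrow> 0 < a * b * (eR - eL) * (dU - dD)" using key by linarith
    also have "\<dots> \<longleftrightarrow> 0 < dU - dD"
    proof -
      have gen: "\<And>c x::real. 0 < c \<Longrightarrow> (0 < c * x) = (0 < x)" by (simp add: zero_less_mult_iff)
      show ?thesis by (rule gen[OF P])
    qed
    finally show ?thesis by linarith
  qed
  have iff3: "u < clock_K p N u \<longleftrightarrow> 1 / real N < overall_rho p N"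
  proof -
    have "u < clock_K p N u \<longleftrightarrow> u * 1 < u * (real N * overall_rho p N)"
      by (simp add: clock_K_def mult_ac)
    also have "\<dots> \<longleftrightarrow> 1 < real N * overall_rho p N" using assms(7) by simp
    also have "\<dots> \<longleftrightarrow> 1 / real N < overall_rho p N" using Npos by (simp add: field_simps)
    finally show ?thesis .
  qed
  show ?thesis using iff1 iff2 iff3 by blast
qed

end
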